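(* Let $G$ be a graph with a linear order $<$ on $V(G)$ satisfying the X-property, and let $s<t$ be vertices with $\operatorname{dist}(s,t)<\infty$. Then for every integer $k\ge 1$, the closed neighborhood $N[\alpha_s(k)]$ contains $\alpha_s(k-1)$ or $\beta_s(k-1)$.
   Context: The X-property: for all vertices $p<q<r<s$, if $\{p,r\}\in E(G)$ and $\{q,s\}\in E(G)$ then $\{p,s\}\in E(G)$. $N[v]$ is the closed neighborhood of $v$. For an integer $k\ge0$, $\alpha_s(k)$ (resp. $\beta_s(k)$) is the leftmost (resp. rightmost) vertex, w.r.t. $<$, that can be reached from $s$ by a path of length at most $k$ all of whose vertices $v$ satisfy $v\le t$. (In particular $\alpha_s(0)=\beta_s(0)=s$.) *)

theory Defs
  imports Main
begin

definition simple_graph :: "'a set \<Rightarrow> ('a \<Rightarrow> 'a \<Rightarrow> bool) \<Rightarrow> bool" where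
  "simple_graph V E \<longleftrightarrow> finite V \<and> (\<forall>u v. E u v \<longrightarrow> u \<in> V \<and> v \<in> V)
     \<and> (\<forall>u v. E u v \<longrightarrow> E v u) \<and> (\<forall>u. \<not> E u u)"

definition X_property :: "'a::linorder set \<Rightarrow> ('a \<Rightarrow> 'a \<Rightarrow> bool) \<Rightarrow> bool" where
  "X_property V E \<longleftrightarrow> (\<forall>p\<in>V. \<forall>q\<in>V. \<forall>r\<in>V. \<forall>s\<in>V.
      p < q \<and> q < r \<and> r < s \<and> E p r \<and> E q s \<longrightarrow> E p s)"

text \<open>A path: nonempty list of distinct vertices, consecutive ones adjacent.
  Its length is the number of edges, i.e. length minus one.\<close>
definition is_path :: "'a set \<Rightarrow> ('a \<Rightarrow> 'a \<Rightarrow> bool) \<Rightarrow> 'a list \<Rightarrow> bool" where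
  "is_path V E p \<longleftrightarrow> p \<noteq> [] \<and> set p \<subseteq> V \<and> distinct p
     \<and> (\<forall>i. Suc i < length p \<longrightarrow> E (p ! i) (p ! Suc i))"

definition closed_nbhd :: "'a set \<Rightarrow> ('a \<Rightarrow> 'a \<Rightarrow> bool) \<Rightarrow> 'a \<Rightarrow> 'a set" where
  "closed_nbhd V E v = {u \<in> V. E v u} \<union> {v}"

text \<open>dist(s,t) < infinity: some path joins s and t.\<close>
definition connected_pair :: "'a set \<Rightarrow> ('a \<Rightarrow> 'a \<Rightarrow> bool) \<Rightarrow> 'a \<Rightarrow> 'a \<Rightarrow> bool" where
  "connected_pair V E s t \<longleftrightarrow> (\<exists>p. is_path V E p \<and> hd p = s \<and> last p = t)"

definition reach_le :: "'a set \<Rightarrow> ('a \<Rightarrow> 'a \<Rightarrow> bool) \<Rightarrow> 'a::linorder \<Rightarrow> 'a \<Rightarrow> nat \<Rightarrow> 'a set" where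
  "reach_le V E t s k = {v. \<exists>p. is_path V E p \<and> hd p = s \<and> last p = v
      \<and> length p \<le> k + 1 \<and> (\<forall>x\<in>set p. x \<le> t)}"

definition alpha :: "'a set \<Rightarrow> ('a \<Rightarrow> 'a \<Rightarrow> bool) \<Rightarrow> 'a::linorder \<Rightarrow> 'a \<Rightarrow> nat \<Rightarrow> 'a" where
  "alpha V E t s k = Min (reach_le V E t s k)"

definition beta :: "'a set \<Rightarrow> ('a \<Rightarrow> 'a \<Rightarrow> bool) \<Rightarrow> 'a::linorder \<Rightarrow> 'a \<Rightarrow> nat \<Rightarrow> 'a" where
  "beta V E t s k = Max (reach_le V E t s k)"

end

theory Submission
  imports Defs
begin

lemma cross_lemma:
  "xs \<noteq> [] \<Longrightarrow> P (hd xs) \<Longrightarrow> \<not> P (last xs) \<Longrightarrow>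
   \<exists>i. Suc i < length xs \<and> P (xs!i) \<and> \<not> P (xs ! Suc i)"
proof (induction xs)
  case Nil then show ?case by simp
next
  case (Cons x xs)
  show ?case
  proof (cases xs)
    case Nil then show ?thesis using Cons by simp
  next
    case (Cons y ys)
    show ?thesis
    proof (cases "P y")
      case True
      then obtain i where "Suc i < length xs" "P (xs!i)" "\<not> P (xs ! Suc i)"
        using Cons.IH Cons.prems Cons by auto
      then show ?thesis by (intro exI[of _ "Suc i"]) auto
    next
      case False
      then show ?thesis using Cons.prems Cons by (intro exI[of _ 0]) auto
    qed
  qed
qed

lemma path_take:
  assumes "is_path V E p" "0 < n"
  shows "is_path V E (take n p)"
  using assms unfolding is_path_def
  by (auto dest: in_set_takeD)

lemma path_snoc:
  assumes "is_path V E q" "a \<in> V" "a \<notin> set q" "E (last q) a"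
  shows "is_path V E (q @ [a])"
  unfolding is_path_def
proof (intro conjI allI impI)
  show "q @ [a] \<noteq> []" by simp
  show "set (q @ [a]) \<subseteq> V" using assms unfolding is_path_def by auto
  show "distinct (q @ [a])" using assms unfolding is_path_def by auto
  fix i assume i: "Suc i < length (q @ [a])"
  show "E ((q @ [a]) ! i) ((q @ [a]) ! Suc i)"
  proof (cases "Suc i < length q")
    case True
    then show ?thesis using assms unfolding is_path_def by (simp add: nth_append)
  next
    case False
    then have "Suc i = length q" using i by simp
    moreover have "q \<noteq> []" using assms unfolding is_path_def by auto
    ultimately have "i = length q - 1" by simp
    then show ?thesis using assms \<open>q \<noteq> []\<close> \<open>Suc i = length q\<close>
      by (simp add: nth_append last_conv_nth)
  qed
qed

lemma mem_reach:
  assumes "is_path V E P" "hd P = s" "length P \<le> k + 1" "\<forall>x\<in>set P. x \<le> t" "i < length P"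
  shows "P ! i \<in> reach_le V E t s k"
proof -
  have "is_path V E (take (Suc i) P)" using path_take assms by auto
  moreover have "hd (take (Suc i) P) = s" using assms
    by (metis hd_take zero_less_Suc)
  moreover have "last (take (Suc i) P) = P ! i" using assms
    by (simp add: take_Suc_conv_app_nth)
  moreover have "length (take (Suc i) P) \<le> k + 1" using assms by simp
  moreover have "\<forall>x\<in>set (take (Suc i) P). x \<le> t" using assms by (auto dest: in_set_takeD)
  ultimately show ?thesis unfolding reach_le_def by blast
qed

lemma reach_mono: "j \<le> k \<Longrightarrow> reach_le V E t s j \<subseteq> reach_le V E t s k"
  unfolding reach_le_def by fastforce

lemma reach_fin: "simple_graph V E \<Longrightarrow> finite (reach_le V E t s k)"
proof -
  assume "simple_graph V E"
  then have "finite V" unfolding simple_graph_def by auto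
  moreover have "reach_le V E t s k \<subseteq> V" unfolding reach_le_def is_path_def
    by auto
  ultimately show ?thesis by (metis finite_subset)
qed

lemma reach_s: "s \<in> V \<Longrightarrow> s \<le> t \<Longrightarrow> s \<in> reach_le V E t s k"
  unfolding reach_le_def is_path_def by (intro CollectI exI[of _ "[s]"]) auto

lemma reach_0: "reach_le V E t s 0 \<subseteq> {s}"
  unfolding reach_le_def is_path_def
  by auto (metis One_nat_def hd_conv_nth last_conv_nth le_numeral_extra(4) length_greater_0_conv
      less_one linorder_not_less nat_less_le diff_is_0_eq')

theorem lemma10:
  fixes V :: "'a::linorder set" and E :: "'a \<Rightarrow> 'a \<Rightarrow> bool" and s t :: 'a and k :: nat
  assumes "simple_graph V E"
    and "X_property V E"
    and "s \<in> V" and "t \<in> V" and "s < t"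
    and "connected_pair V E s t"
    and "k \<ge> 1"
  shows "alpha V E t s (k - 1) \<in> closed_nbhd V E (alpha V E t s k)
       \<or> beta V E t s (k - 1) \<in> closed_nbhd V E (alpha V E t s k)"
proof -
  define R where "R = reach_le V E t s"
  define a where "a = alpha V E t s k"
  define a' where "a' = alpha V E t s (k - 1)"
  define b' where "b' = beta V E t s (k - 1)"
  have sym: "\<And>u v. E u v \<Longrightarrow> E v u" and irr: "\<And>u. \<not> E u u"
    and inV: "\<And>u v. E u v \<Longrightarrow> u \<in> V \<and> v \<in> V"
    using assms(1) unfolding simple_graph_def by auto
  have X: "\<And>p q r x. p \<in> V \<Longrightarrow> q \<in> V \<Longrightarrow> r \<in> V \<Longrightarrow> x \<in> V \<Longrightarrow>
      p < q \<Longrightarrow> q < r \<Longrightarrow> r < x \<Longrightarrow> E p r \<Longrightarrow> E q x \<Longrightarrow> E p x"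
    using assms(2) unfolding X_property_def by blast
  have fin: "\<And>j. finite (R j)" unfolding R_def using reach_fin assms(1) by blast
  have sR: "\<And>j. s \<in> R j" unfolding R_def using reach_s assms by fastforce
  have ne: "\<And>j. R j \<noteq> {}" using sR by blast
  have RV: "\<And>j. R j \<subseteq> V" unfolding R_def reach_le_def is_path_def by auto
  have aR: "a \<in> R k" unfolding a_def alpha_def R_def[symmetric] using fin ne by simp
  have a'R: "a' \<in> R (k-1)" unfolding a'_def alpha_def R_def[symmetric] using fin ne by simp
  have b'R: "b' \<in> R (k-1)" unfolding b'_def beta_def R_def[symmetric] using fin ne by simp
  have a'min: "\<And>x. x \<in> R (k-1) \<Longrightarrow> a' \<le> x"
    unfolding a'_def alpha_def R_def[symmetric] using fin by simp
  have b'max: "\<And>x. x \<in> R (k-1) \<Longrightarrow> x \<le> b'"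
    unfolding b'_def beta_def R_def[symmetric] using fin by simp
  have amin: "\<And>x. x \<in> R k \<Longrightarrow> a \<le> x"
    unfolding a_def alpha_def R_def[symmetric] using fin by simp
  have mono: "R (k-1) \<subseteq> R k" unfolding R_def by (rule reach_mono) simp
  show ?thesis
  proof (cases "a \<in> R (k-1)")
    case True
    then have "a' \<le> a" using a'min by blast
    moreover have "a \<le> a'" using amin mono a'R by blast
    ultimately have "a' = a" by simp
    then show ?thesis unfolding a'_def[symmetric] a_def[symmetric] closed_nbhd_def by simp
  next
    case anot: False
    have "a \<le> a'" using amin mono a'R by blast
    moreover have "a \<noteq> a'" using anot a'R by blast
    ultimately have aa': "a < a'" by simp
    obtain p where p: "is_path V E p" "hd p = s" "last p = a" "length p \<le> k + 1"
        "\<forall>x\<in>set p. x \<le> t"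
      using aR unfolding R_def reach_le_def by blast
    have "a \<in> set p" using p by (metis is_path_def last_in_set)
    then have "a \<le> t" using p by blast
    have short: False if q: "is_path V E q" "hd q = s" "length q \<le> k - 1"
        "\<forall>x\<in>set q. x \<le> t" "E (last q) a" for q
    proof -
      have "a \<notin> set q"
      proof
        assume "a \<in> set q"
        then obtain j where "j < length q" "q ! j = a" by (metis in_set_conv_nth)
        moreover have "length q \<le> k - 1 + 1" using q by simp
        ultimately have "q ! j \<in> reach_le V E t s (k-1)" using mem_reach[of V E q s "k-1" t j] q
          by blast
        then have "a \<in> R (k-1)" unfolding R_def using \<open>q ! j = a\<close> by simp
        then show False using anot by simp
      qed
      have "a \<in> V" using inV q(5) by blast
      then have p: "is_path V E (q @ [a])" using path_snoc[OF q(1) _ \<open>a \<notin> set q\<close> q(5)] by blast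
      have "hd (q @ [a]) = s" using q unfolding is_path_def by simp
      moreover note \<open>a \<le> t\<close>
      moreover have "last (q @ [a]) = a" by simp
      moreover have "length (q @ [a]) \<le> k - 1 + 1" using q(3) by simp
      moreover have "\<forall>x\<in>set (q @ [a]). x \<le> t" using q(4) \<open>a \<le> t\<close> by simp
      ultimately have "a \<in> reach_le V E t s (k-1)" unfolding reach_le_def
        using p by blast
      then have "a \<in> R (k-1)" unfolding R_def by simp
      then show False using anot by simp
    qed

    have "\<not> length p \<le> k - 1 + 1"
    proof
      assume "length p \<le> k - 1 + 1"
      then have "a \<in> reach_le V E t s (k-1)" unfolding reach_le_def using p by blast
      then show False using anot unfolding R_def by simp
    qed
    then have lp: "length p = k + 1" using p(4) assms(7) by simp
    define q0 where "q0 = take k p"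
    have q0: "is_path V E q0" using path_take[OF p(1)] assms(7) unfolding q0_def by simp
    have q0h: "hd q0 = s" using p(2) assms(7) unfolding q0_def by (metis hd_take not_one_le_zero neq0_conv)
    have q0l: "last q0 = p ! (k-1)" using lp assms(7) unfolding q0_def
      by (metis Suc_diff_1 Suc_eq_plus1 last_conv_nth le_add1 length_take less_nat_zero_code
          linorder_not_le min_absorb2 nth_take diff_less zero_less_one take_eq_Nil)
    have q0len: "length q0 \<le> k - 1 + 1" using lp assms(7) unfolding q0_def by simp
    have q0t: "\<forall>x\<in>set q0. x \<le> t" using p(5) unfolding q0_def by (auto dest: in_set_takeD)
    have "E (p ! (k-1)) (p ! Suc (k-1))"
    proof -
      have "Suc (k-1) < length p" using lp assms(7) by simp
      then show ?thesis using p(1) unfolding is_path_def by blast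
    qed
    moreover have "p ! Suc (k-1) = a" using p(3) lp assms(7)
      by (metis Suc_diff_1 add_diff_cancel_right' last_conv_nth less_le_trans list.size(3) 
          nat_neq_iff zero_less_one add_is_0 one_neq_zero)
    ultimately have Ew0: "E a (p ! (k-1))" using sym by simp
    have "last q0 \<in> reach_le V E t s (k-1)" unfolding reach_le_def using q0 q0h q0len q0t by blast
    then have w0R: "p ! (k-1) \<in> R (k-1)" using q0l unfolding R_def by simp
    define W where "W = {x \<in> R (k-1). E a x}"
    have finW: "finite W" unfolding W_def using fin by simp
    have neW: "W \<noteq> {}" unfolding W_def using w0R Ew0 by blast
    define w where "w = Max W"
    have wW: "w \<in> W" unfolding w_def using finW neW by simp
    have wmax: "\<And>x. x \<in> R (k-1) \<Longrightarrow> E a x \<Longrightarrow> x \<le> w"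
      unfolding w_def using finW W_def by simp
    have wR: "w \<in> R (k-1)" and Eaw: "E a w" using wW W_def by auto
    have wV: "w \<in> V" and aV: "a \<in> V" using inV Eaw by auto
    show ?thesis
    proof (cases "w = a' \<or> w = b'")
      case True
      then show ?thesis using Eaw wV unfolding closed_nbhd_def a'_def[symmetric] b'_def[symmetric]
        a_def[symmetric] by auto
    next
      case False
      have lw: "a' < w" using a'min[OF wR] False by (auto simp: order_le_less)
      have wu: "w < b'" using b'max[OF wR] False by (auto simp: order_le_less)
      have notin: "w \<notin> set P" if P: "is_path V E P" "hd P = s" "length P \<le> k - 1 + 1"
         "\<forall>x\<in>set P. x \<le> t" "last P \<noteq> w" for P
      proof
        assume "w \<in> set P"
        then obtain j where j: "j < length P" "P ! j = w" by (metis in_set_conv_nth)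
        have "P \<noteq> []" using P unfolding is_path_def by simp
        then have "j \<noteq> length P - 1" using j P(5) by (metis last_conv_nth)
        then have jl: "Suc j < length P" using j by simp
        have "is_path V E (take (Suc j) P)" using path_take[OF P(1)] by simp
        moreover have "hd (take (Suc j) P) = s" using P(2) by (metis hd_take zero_less_Suc)
        moreover have "length (take (Suc j) P) \<le> k - 1" using jl P(3) by simp
        moreover have "\<forall>x\<in>set (take (Suc j) P). x \<le> t" using P(4) by (auto dest: in_set_takeD)
        moreover have "last (take (Suc j) P) = w" using j by (simp add: take_Suc_conv_app_nth)
        ultimately show False using short sym Eaw by blast
      qed
      have nbig: False if "x \<in> R (k-1)" "w < x" "E a x" for x
        using wmax that by fastforce
      have geq: "a < x" if "x \<in> R (k-1)" for x using a'min[OF that] aa' by simp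
      have "s \<noteq> w"
      proof
        assume sw: "s = w"
        show False
        proof (cases "k = 1")
          case True
          then have "a' = s" using a'R reach_0[of V E t s] unfolding R_def by auto
          then show False using sw False by simp
        next
          case k2: False
          have "is_path V E [s]" "hd [s] = s" "length [s] \<le> k - 1" "\<forall>x\<in>set [s]. x \<le> t"
            "E (last [s]) a"
            using assms k2 sw Eaw sym unfolding is_path_def by auto
          then show False using short by blast
        qed
      qed
      show ?thesis
      proof (cases "s < w")
        case True
        obtain P where P: "is_path V E P" "hd P = s" "last P = b'" "length P \<le> k - 1 + 1"
          "\<forall>x\<in>set P. x \<le> t" using b'R unfolding R_def reach_le_def by blast
        have wP: "w \<notin> set P" using notin[OF P(1,2,4,5)] P(3) wu by simp
        have "P \<noteq> []" using P unfolding is_path_def by simp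
        then obtain i where i: "Suc i < length P" "P ! i < w" "\<not> P ! Suc i < w"
          using cross_lemma[of P "\<lambda>x. x < w"] P True wu less_asym by metis
        have "P ! Suc i \<noteq> w" using wP i(1) by (metis nth_mem)
        then have gt: "w < P ! Suc i" using i(3) by simp
        have R1: "P ! i \<in> R (k-1)" and R2: "P ! Suc i \<in> R (k-1)"
          using mem_reach[OF P(1,2,4,5)] i(1) unfolding R_def by auto
        have E12: "E (P ! i) (P ! Suc i)" using P(1) i(1) unfolding is_path_def by simp
        have "E a (P ! Suc i)"
          using X[OF aV _ wV _ geq[OF R1] i(2) gt Eaw E12] inV E12 by blast
        then show ?thesis using nbig[OF R2 gt] by simp
      next
        case False
        then have sw: "w < s" using \<open>s \<noteq> w\<close> by simp
        obtain P where P: "is_path V E P" "hd P = s" "last P = a'" "length P \<le> k - 1 + 1"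
          "\<forall>x\<in>set P. x \<le> t" using a'R unfolding R_def reach_le_def by blast
        have wP: "w \<notin> set P" using notin[OF P(1,2,4,5)] P(3) lw by simp
        have "P \<noteq> []" using P unfolding is_path_def by simp
        then obtain i where i: "Suc i < length P" "w < P ! i" "\<not> w < P ! Suc i"
          using cross_lemma[of P "\<lambda>x. w < x"] P sw lw less_asym by metis
        have "P ! Suc i \<noteq> w" using wP i(1) by (metis nth_mem)
        then have lt: "P ! Suc i < w" using i(3) by simp
        have R1: "P ! i \<in> R (k-1)" and R2: "P ! Suc i \<in> R (k-1)"
          using mem_reach[OF P(1,2,4,5)] i(1) unfolding R_def by auto
        have E12: "E (P ! Suc i) (P ! i)" using P(1) i(1) sym unfolding is_path_def by simp
        have "E a (P ! i)"
          using X[OF aV _ wV _ geq[OF R2] lt i(2) Eaw E12] inV E12 by blast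
        then show ?thesis using nbig[OF R1 i(2)] by simp
      qed
    qed
  qed
qed
end
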